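(* Let $\Pi$ be the set of graphs $G$ satisfying $\sum_{H:|V(H)|=4} w_H\cdot p(H,G)\le \frac{5}{16}$, where the weights are $w_{K_4}=1$, $w_{\bar{K_4}}=\frac12$, $w_{D_4}=\frac{5}{12}$, $w_{\bar{D_4}}=\frac{5}{12}$, $w_{P_3}=\frac13$, $w_{\bar{P_3}}=\frac16$, $w_{C_4}=\frac12$, $w_{\bar{C_4}}=\frac13$, $w_{K_{1,3}}=\frac14$, $w_{\bar{K_{1,3}}}=\frac14$, $w_{P_4}=\frac14$. Then $\Pi=\{G:\phi(G)\le 0\}$, where $\phi(G)=2\,t_{\mathrm{inj}}(C_4,G)-t_{\mathrm{inj}}(K_2,G)+\frac38$.
   Context: $K_4$ is the complete graph on 4 vertices, $D_4$ is $K_4$ minus an edge, $P_3$ is the 4-vertex graph consisting of a path on 3 vertices plus an isolated vertex, $C_4$ the 4-cycle, $P_4$ the path on 4 vertices, $K_{1,3}$ the star on 4 vertices, $K_2$ a single edge, and $\bar H$ the complement of $H$. $p(H,G)$ is the fraction of induced subgraphs of $G$ on $|V(H)|$ vertices isomorphic to $H$. For graphs $H$ on $h$ vertices and $G$ on $n$ vertices, $t_{\mathrm{inj}}(H,G)$ is the number of injective maps $\varphi:V(H)\to V(G)$ such that $uv\in E(H)$ implies $\varphi(u)\varphi(v)\in E(G)$, divided by $n(n-1)\cdots(n-h+1)$. *)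

theory Defs
  imports "HOL-Library.FuncSet" Complex_Main
begin

definition simple_graph :: "'a set \<Rightarrow> ('a \<Rightarrow> 'a \<Rightarrow> bool) \<Rightarrow> bool" where
  "simple_graph V E \<longleftrightarrow> finite V \<and> (\<forall>x y. E x y \<longrightarrow> x \<in> V \<and> y \<in> V)
     \<and> (\<forall>x y. E x y \<longrightarrow> E y x) \<and> (\<forall>x. \<not> E x x)"

text \<open>Small pattern graphs on vertex set {0..<h}, given by an undirected edge list.\<close>
definition mk_graph :: "(nat \<times> nat) set \<Rightarrow> nat \<Rightarrow> nat \<Rightarrow> bool" where
  "mk_graph es u v \<longleftrightarrow> (u, v) \<in> es \<or> (v, u) \<in> es"

definition compl4 :: "(nat \<Rightarrow> nat \<Rightarrow> bool) \<Rightarrow> nat \<Rightarrow> nat \<Rightarrow> bool" where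
  "compl4 F u v \<longleftrightarrow> u < 4 \<and> v < 4 \<and> u \<noteq> v \<and> \<not> F u v"

definition K4 :: "nat \<Rightarrow> nat \<Rightarrow> bool" where
  "K4 = mk_graph {(0,1),(0,2),(0,3),(1,2),(1,3),(2,3)}"
definition D4 :: "nat \<Rightarrow> nat \<Rightarrow> bool" where
  "D4 = mk_graph {(0,2),(0,3),(1,2),(1,3),(2,3)}"
definition P3 :: "nat \<Rightarrow> nat \<Rightarrow> bool" where
  "P3 = mk_graph {(0,1),(1,2)}"
definition C4 :: "nat \<Rightarrow> nat \<Rightarrow> bool" where
  "C4 = mk_graph {(0,1),(1,2),(2,3),(3,0)}"
definition P4 :: "nat \<Rightarrow> nat \<Rightarrow> bool" where
  "P4 = mk_graph {(0,1),(1,2),(2,3)}"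
definition K13 :: "nat \<Rightarrow> nat \<Rightarrow> bool" where
  "K13 = mk_graph {(0,1),(0,2),(0,3)}"
definition K2 :: "nat \<Rightarrow> nat \<Rightarrow> bool" where
  "K2 = mk_graph {(0,1)}"

definition induced_iso :: "('a \<Rightarrow> 'a \<Rightarrow> bool) \<Rightarrow> 'a set \<Rightarrow> (nat \<Rightarrow> nat \<Rightarrow> bool) \<Rightarrow> nat \<Rightarrow> bool" where
  "induced_iso E S F h \<longleftrightarrow>
     (\<exists>f. bij_betw f S {0..<h} \<and> (\<forall>x\<in>S. \<forall>y\<in>S. E x y \<longleftrightarrow> F (f x) (f y)))"

definition p_dens :: "(nat \<Rightarrow> nat \<Rightarrow> bool) \<Rightarrow> nat \<Rightarrow> 'a set \<Rightarrow> ('a \<Rightarrow> 'a \<Rightarrow> bool) \<Rightarrow> real" where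
  "p_dens F h V E =
     real (card {S. S \<subseteq> V \<and> card S = h \<and> induced_iso E S F h}) / real (card V choose h)"

definition t_inj :: "(nat \<Rightarrow> nat \<Rightarrow> bool) \<Rightarrow> nat \<Rightarrow> 'a set \<Rightarrow> ('a \<Rightarrow> 'a \<Rightarrow> bool) \<Rightarrow> real" where
  "t_inj F h V E =
     real (card {g \<in> {0..<h} \<rightarrow>\<^sub>E V. inj_on g {0..<h} \<and>
                  (\<forall>u\<in>{0..<h}. \<forall>v\<in>{0..<h}. F u v \<longrightarrow> E (g u) (g v))})
     / (\<Prod>i<h. (real (card V) - real i))"

definition weighted4 :: "'a set \<Rightarrow> ('a \<Rightarrow> 'a \<Rightarrow> bool) \<Rightarrow> real" where
  "weighted4 V E =
       1 * p_dens K4 4 V E + 1/2 * p_dens (compl4 K4) 4 V E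
     + 5/12 * p_dens D4 4 V E + 5/12 * p_dens (compl4 D4) 4 V E
     + 1/3 * p_dens P3 4 V E + 1/6 * p_dens (compl4 P3) 4 V E
     + 1/2 * p_dens C4 4 V E + 1/3 * p_dens (compl4 C4) 4 V E
     + 1/4 * p_dens K13 4 V E + 1/4 * p_dens (compl4 K13) 4 V E
     + 1/4 * p_dens P4 4 V E"

definition phi :: "'a set \<Rightarrow> ('a \<Rightarrow> 'a \<Rightarrow> bool) \<Rightarrow> real" where
  "phi V E = 2 * t_inj C4 4 V E - t_inj K2 2 V E + 3/8"

end

theory Submission
  imports Defs
begin


lemma iso_list:
  assumes "finite S" "card S = h"
  shows "induced_iso E S F h \<longleftrightarrow>
    (\<exists>xs. distinct xs \<and> set xs = S \<and> (\<forall>u<h. \<forall>v<h. E (xs!u) (xs!v) \<longleftrightarrow> F u v))"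
proof
  assume "induced_iso E S F h"
  then obtain f where bf: "bij_betw f S {0..<h}" and H: "\<forall>x\<in>S. \<forall>y\<in>S. E x y \<longleftrightarrow> F (f x) (f y)"
    unfolding induced_iso_def by blast
  define g where "g = the_inv_into S f"
  have bg: "bij_betw g {0..<h} S" unfolding g_def using bf by (rule bij_betw_the_inv_into)
  have fg: "f (g u) = u" if "u < h" for u
    unfolding g_def using bf that by (simp add: f_the_inv_into_f_bij_betw)
  define xs where "xs = map g [0..<h]"
  have "distinct xs" unfolding xs_def using bg by (simp add: distinct_map bij_betw_def)
  moreover have "set xs = S" unfolding xs_def using bg by (simp add: bij_betw_def)
  moreover have "\<forall>u<h. \<forall>v<h. E (xs!u) (xs!v) \<longleftrightarrow> F u v"
  proof (intro allI impI)
    fix u v assume "u < h" "v < h"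
    then have "g u \<in> S" "g v \<in> S" using bg by (auto simp: bij_betw_def)
    then show "E (xs!u) (xs!v) \<longleftrightarrow> F u v" using H fg \<open>u<h\<close> \<open>v<h\<close> by (simp add: xs_def)
  qed
  ultimately show "\<exists>xs. distinct xs \<and> set xs = S \<and> (\<forall>u<h. \<forall>v<h. E (xs!u) (xs!v) \<longleftrightarrow> F u v)" by blast
next
  assume "\<exists>xs. distinct xs \<and> set xs = S \<and> (\<forall>u<h. \<forall>v<h. E (xs!u) (xs!v) \<longleftrightarrow> F u v)"
  then obtain xs where d: "distinct xs" and s: "set xs = S" and H: "\<forall>u<h. \<forall>v<h. E (xs!u) (xs!v) \<longleftrightarrow> F u v"
    by blast
  have len: "length xs = h" using d s assms distinct_card by fastforce
  have bn: "bij_betw ((!) xs) {0..<h} S" using d s len by (intro bij_betw_nth) auto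
  define f where "f = the_inv_into {0..<h} ((!) xs)"
  have bf: "bij_betw f S {0..<h}" unfolding f_def using bn by (rule bij_betw_the_inv_into)
  have xf: "xs ! (f x) = x" if "x \<in> S" for x
    unfolding f_def using bn that by (simp add: f_the_inv_into_f_bij_betw)
  have "\<forall>x\<in>S. \<forall>y\<in>S. E x y \<longleftrightarrow> F (f x) (f y)"
  proof (intro ballI)
    fix x y assume "x \<in> S" "y \<in> S"
    then have "f x < h" "f y < h" using bf by (auto simp: bij_betw_def)
    then show "E x y \<longleftrightarrow> F (f x) (f y)" using H xf \<open>x \<in> S\<close> \<open>y \<in> S\<close> by metis
  qed
  then show "induced_iso E S F h" unfolding induced_iso_def using bf by blast
qed

lemma cnt_list:
  assumes "finite S" "card S = h"
  shows "card {g \<in> {0..<h} \<rightarrow>\<^sub>E S. inj_on g {0..<h} \<and> (\<forall>u\<in>{0..<h}. \<forall>v\<in>{0..<h}. F u v \<longrightarrow> E (g u) (g v))}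
       = card {xs. distinct xs \<and> set xs = S \<and> (\<forall>u<h. \<forall>v<h. F u v \<longrightarrow> E (xs!u) (xs!v))}"
proof (rule bij_betw_same_card[of "\<lambda>g. map g [0..<h]"], rule bij_betw_byWitness[where f' = "\<lambda>xs. restrict ((!) xs) {0..<h}"])
  show "\<forall>g\<in>{g \<in> {0..<h} \<rightarrow>\<^sub>E S. inj_on g {0..<h} \<and> (\<forall>u\<in>{0..<h}. \<forall>v\<in>{0..<h}. F u v \<longrightarrow> E (g u) (g v))}.
      restrict ((!) (map g [0..<h])) {0..<h} = g"
    by (auto simp: fun_eq_iff PiE_def extensional_def)
  show "\<forall>xs\<in>{xs. distinct xs \<and> set xs = S \<and> (\<forall>u<h. \<forall>v<h. F u v \<longrightarrow> E (xs!u) (xs!v))}.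
      map (restrict ((!) xs) {0..<h}) [0..<h] = xs"
  proof
    fix xs assume "xs \<in> {xs. distinct xs \<and> set xs = S \<and> (\<forall>u<h. \<forall>v<h. F u v \<longrightarrow> E (xs!u) (xs!v))}"
    then have len: "length xs = h" using assms distinct_card by fastforce
    show "map (restrict ((!) xs) {0..<h}) [0..<h] = xs"
      by (rule nth_equalityI) (auto simp: len)
  qed
  show "(\<lambda>g. map g [0..<h]) ` {g \<in> {0..<h} \<rightarrow>\<^sub>E S. inj_on g {0..<h} \<and> (\<forall>u\<in>{0..<h}. \<forall>v\<in>{0..<h}. F u v \<longrightarrow> E (g u) (g v))}
    \<subseteq> {xs. distinct xs \<and> set xs = S \<and> (\<forall>u<h. \<forall>v<h. F u v \<longrightarrow> E (xs!u) (xs!v))}"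
  proof clarify
    fix g assume g: "g \<in> {0..<h} \<rightarrow>\<^sub>E S" "inj_on g {0..<h}" "\<forall>u\<in>{0..<h}. \<forall>v\<in>{0..<h}. F u v \<longrightarrow> E (g u) (g v)"
    have sub: "g ` {0..<h} \<subseteq> S" using g(1) by auto
    have "card (g ` {0..<h}) = card S" using g(2) assms by (simp add: card_image)
    then have "g ` {0..<h} = S" using sub assms(1) card_subset_eq by blast
    then show "distinct (map g [0..<h]) \<and> set (map g [0..<h]) = S \<and> (\<forall>u<h. \<forall>v<h. F u v \<longrightarrow> E (map g [0..<h] ! u) (map g [0..<h] ! v))"
      using g by (simp add: distinct_map)
  qed
  show "(\<lambda>xs. restrict ((!) xs) {0..<h}) ` {xs. distinct xs \<and> set xs = S \<and> (\<forall>u<h. \<forall>v<h. F u v \<longrightarrow> E (xs!u) (xs!v))}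
    \<subseteq> {g \<in> {0..<h} \<rightarrow>\<^sub>E S. inj_on g {0..<h} \<and> (\<forall>u\<in>{0..<h}. \<forall>v\<in>{0..<h}. F u v \<longrightarrow> E (g u) (g v))}"
  proof clarify
    fix xs assume xs: "distinct xs" "S = set xs" "\<forall>u<h. \<forall>v<h. F u v \<longrightarrow> E (xs!u) (xs!v)"
    then have len: "length xs = h" using assms distinct_card by fastforce
    show "restrict ((!) xs) {0..<h} \<in> {0..<h} \<rightarrow>\<^sub>E set xs \<and> inj_on (restrict ((!) xs) {0..<h}) {0..<h} \<and>
         (\<forall>u\<in>{0..<h}. \<forall>v\<in>{0..<h}. F u v \<longrightarrow> E (restrict ((!) xs) {0..<h} u) (restrict ((!) xs) {0..<h} v))"
      using xs len by (auto simp: inj_on_def nth_eq_iff_index_eq)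
  qed
qed

definition L4 :: "'a \<Rightarrow> 'a \<Rightarrow> 'a \<Rightarrow> 'a \<Rightarrow> 'a list list" where
  "L4 a b c d = [[a,b,c,d], [a,b,d,c], [a,c,b,d], [a,c,d,b], [a,d,b,c], [a,d,c,b], [b,a,c,d], [b,a,d,c], [b,c,a,d], [b,c,d,a], [b,d,a,c], [b,d,c,a], [c,a,b,d], [c,a,d,b], [c,b,a,d], [c,b,d,a], [c,d,a,b], [c,d,b,a], [d,a,b,c], [d,a,c,b], [d,b,a,c], [d,b,c,a], [d,c,a,b], [d,c,b,a]]"

lemma L4_distinct: "distinct [a,b,c,d] \<Longrightarrow> distinct (L4 a b c d)"
  unfolding L4_def by auto

lemma len4: "length xs = 4 \<Longrightarrow> \<exists>w x y z. xs = [w,x,y,z]"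
  by (cases xs; simp; rename_tac l; case_tac l; simp; rename_tac l; case_tac l; simp; rename_tac l; case_tac l; simp)

lemma perms4:
  assumes "distinct [a,b,c,d]"
  shows "{xs. distinct xs \<and> set xs = {a,b,c,d}} = set (L4 a b c d)"
proof
  show "set (L4 a b c d) \<subseteq> {xs. distinct xs \<and> set xs = {a,b,c,d}}"
    using assms unfolding L4_def by auto
next
  show "{xs. distinct xs \<and> set xs = {a,b,c,d}} \<subseteq> set (L4 a b c d)"
  proof clarify
    fix xs :: "'a list" assume d: "distinct xs" and s: "set xs = {a,b,c,d}"
    have "length xs = card {a,b,c,d}" using d s distinct_card by fastforce
    also have "\<dots> = 4" using assms by simp
    finally obtain w x y z where xs: "xs = [w,x,y,z]" using len4 by blast
    have "w \<in> {a,b,c,d}" "x \<in> {a,b,c,d}" "y \<in> {a,b,c,d}" "z \<in> {a,b,c,d}" using s xs by auto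
    then show "xs \<in> set (L4 a b c d)" using d unfolding xs L4_def
      by (simp; elim disjE; simp)
  qed
qed


lemma all4: "(\<forall>u<(4::nat). P u) \<longleftrightarrow> P 0 \<and> P 1 \<and> P 2 \<and> P 3"
  by (auto simp: numeral_eq_Suc less_Suc_eq)

lemma local4:
  fixes E :: "'a \<Rightarrow> 'a \<Rightarrow> bool"
  assumes sym: "\<forall>x y. E x y \<longrightarrow> E y x" and irr: "\<forall>x. \<not> E x x" and dist: "distinct [a,b,c,d]"
  defines "cnt F \<equiv> real (card {g \<in> {0..<4} \<rightarrow>\<^sub>E {a,b,c,d}. inj_on g {0..<4} \<and> (\<forall>u\<in>{0..<4}. \<forall>v\<in>{0..<4}. F u v \<longrightarrow> E (g u) (g v))})"
  defines "ind F \<equiv> (if induced_iso E {a,b,c,d} F 4 then 1 else 0::real)"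
  shows "48 * ind K4 + 24 * ind (compl4 K4) + 20 * ind D4 + 20 * ind (compl4 D4) + 16 * ind P3 + 8 * ind (compl4 P3)
     + 24 * ind C4 + 16 * ind (compl4 C4) + 12 * ind K13 + 12 * ind (compl4 K13) + 12 * ind P4 = 24 + 2 * cnt C4 - cnt K2"
proof -
  have fin: "finite {a,b,c,d}" by simp
  have c4: "card {a,b,c,d} = 4" using dist by simp
  have iso: "induced_iso E {a,b,c,d} F 4 \<longleftrightarrow> (\<exists>xs\<in>set (L4 a b c d). \<forall>u<4. \<forall>v<4. E (xs!u) (xs!v) \<longleftrightarrow> F u v)" for F
    using iso_list[OF fin c4, of E F] perms4[OF dist] by blast
  have cn: "cnt F = real (length (filter (\<lambda>xs. \<forall>u<4. \<forall>v<4. F u v \<longrightarrow> E (xs!u) (xs!v)) (L4 a b c d)))" for F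
  proof -
    have "{xs. distinct xs \<and> set xs = {a,b,c,d} \<and> (\<forall>u<4. \<forall>v<4. F u v \<longrightarrow> E (xs!u) (xs!v))}
        = set (filter (\<lambda>xs. \<forall>u<4. \<forall>v<4. F u v \<longrightarrow> E (xs!u) (xs!v)) (L4 a b c d))"
      using perms4[OF dist] by auto
    then show ?thesis unfolding cnt_def cnt_list[OF fin c4]
      using distinct_card[OF distinct_filter[OF L4_distinct[OF dist]]] by simp
  qed
  have e: "E b a = E a b" "E c a = E a c" "E d a = E a d" "E c b = E b c" "E d b = E b d" "E d c = E c d"
    "E a a = False" "E b b = False" "E c c = False" "E d d = False"
    using sym irr by blast+
  show ?thesis
    unfolding ind_def cn iso
    apply (cases "E a b"; cases "E a c"; cases "E a d"; cases "E b c"; cases "E b d"; cases "E c d")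
    apply (simp_all add: L4_def all4 e K4_def D4_def P3_def C4_def P4_def K13_def K2_def compl4_def mk_graph_def)
    done
qed



lemma partition_inj:
  assumes "finite V"
  shows "card {g \<in> {0..<h} \<rightarrow>\<^sub>E V. inj_on g {0..<h} \<and> (\<forall>u\<in>{0..<h}. \<forall>v\<in>{0..<h}. F u v \<longrightarrow> E (g u) (g v))}
    = (\<Sum>S\<in>{S. S \<subseteq> V \<and> card S = h}. card {g \<in> {0..<h} \<rightarrow>\<^sub>E S. inj_on g {0..<h} \<and> (\<forall>u\<in>{0..<h}. \<forall>v\<in>{0..<h}. F u v \<longrightarrow> E (g u) (g v))})"
proof -
  define I where "I S = {g \<in> {0..<h} \<rightarrow>\<^sub>E S. inj_on g {0..<h} \<and> (\<forall>u\<in>{0..<h}. \<forall>v\<in>{0..<h}. F u v \<longrightarrow> E (g u) (g v))}" for S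
  define T where "T = {S. S \<subseteq> V \<and> card S = h}"
  have img: "g ` {0..<h} = S" if "g \<in> I S" "finite S" "card S = h" for g S
  proof -
    have sub: "g ` {0..<h} \<subseteq> S" using that(1) unfolding I_def by auto
    have "card (g ` {0..<h}) = card S" using that unfolding I_def by (simp add: card_image)
    then show ?thesis using sub that(2) card_subset_eq by blast
  qed
  have eq: "I V = (\<Union>S\<in>T. I S)"
  proof
    show "I V \<subseteq> (\<Union>S\<in>T. I S)"
    proof
      fix g assume g: "g \<in> I V"
      have "g ` {0..<h} \<in> T" using g unfolding I_def T_def by (auto simp: card_image)
      moreover have "g \<in> I (g ` {0..<h})" using g unfolding I_def by (auto simp: PiE_def)
      ultimately show "g \<in> (\<Union>S\<in>T. I S)" by blast
    qed
    show "(\<Union>S\<in>T. I S) \<subseteq> I V" unfolding I_def T_def by (auto simp: PiE_def Pi_def)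
  qed
  have finT: "finite T" unfolding T_def using assms by simp
  have finI: "\<forall>S\<in>T. finite (I S)"
  proof
    fix S assume "S \<in> T"
    then have "finite S" unfolding T_def using assms finite_subset by blast
    then show "finite (I S)" unfolding I_def by (simp add: finite_PiE)
  qed
  have disj: "\<forall>S\<in>T. \<forall>S'\<in>T. S \<noteq> S' \<longrightarrow> I S \<inter> I S' = {}"
  proof (intro ballI impI)
    fix S S' assume "S \<in> T" "S' \<in> T" "S \<noteq> S'"
    then have "finite S" "finite S'" "card S = h" "card S' = h" unfolding T_def using assms finite_subset by blast+
    then show "I S \<inter> I S' = {}" using img \<open>S \<noteq> S'\<close> by blast
  qed
  show ?thesis
    using card_UN_disjoint[OF finT finI disj] eq unfolding I_def T_def by simp
qed

lemma extend_inj: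
  fixes V :: "'a set"
  assumes "finite V" and F: "\<forall>u v. F u v \<longrightarrow> u < k \<and> v < k"
  shows "card {g \<in> {0..<Suc k} \<rightarrow>\<^sub>E V. inj_on g {0..<Suc k} \<and> (\<forall>u\<in>{0..<Suc k}. \<forall>v\<in>{0..<Suc k}. F u v \<longrightarrow> E (g u) (g v))}
    = card {g \<in> {0..<k} \<rightarrow>\<^sub>E V. inj_on g {0..<k} \<and> (\<forall>u\<in>{0..<k}. \<forall>v\<in>{0..<k}. F u v \<longrightarrow> E (g u) (g v))} * (card V - k)"
proof -
  define I where "I h = {g \<in> {0..<h} \<rightarrow>\<^sub>E V. inj_on g {0..<h} \<and> (\<forall>u\<in>{0..<h}. \<forall>v\<in>{0..<h}. F u v \<longrightarrow> E (g u) (g v))}" for h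
  define \<Sigma> where "\<Sigma> = (SIGMA g:I k. V - g ` {0..<k})"
  define m where "m = (\<lambda>(g :: nat \<Rightarrow> 'a, x :: 'a). g(k := x))"
  have ext: "g k = undefined" if "g \<in> I k" for g using that unfolding I_def by (auto simp: PiE_def extensional_def)
  have injm: "inj_on m \<Sigma>"
  proof (rule inj_onI)
    fix p q assume "p \<in> \<Sigma>" "q \<in> \<Sigma>" "m p = m q"
    then obtain g x g' x' where p: "p = (g, x)" and q: "q = (g', x')" and gI: "g \<in> I k" "g' \<in> I k"
      and e: "g(k := x) = g'(k := x')" unfolding \<Sigma>_def m_def by auto
    have "x = x'" using fun_cong[OF e, of k] by simp
    moreover have "g = g'"
    proof
      fix y show "g y = g' y" using fun_cong[OF e, of y] ext[OF gI(1)] ext[OF gI(2)] by (cases "y = k") auto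
    qed
    ultimately show "p = q" using p q by simp
  qed
  have imgm: "m ` \<Sigma> = I (Suc k)"
  proof
    show "m ` \<Sigma> \<subseteq> I (Suc k)"
    proof clarify
      fix g x assume "(g, x) \<in> \<Sigma>"
      then have g: "g \<in> I k" and x: "x \<in> V" "x \<notin> g ` {0..<k}" unfolding \<Sigma>_def by auto
      have "g(k := x) \<in> {0..<Suc k} \<rightarrow>\<^sub>E V" using g x unfolding I_def by (auto simp: PiE_def extensional_def Pi_def less_Suc_eq)
      moreover have "inj_on (g(k := x)) {0..<Suc k}"
      proof -
        have "{0..<Suc k} = insert k {0..<k}" by auto
        moreover have "inj_on (g(k := x)) {0..<k}" using g unfolding I_def by (auto simp: inj_on_def)
        ultimately show ?thesis using x by (auto simp: inj_on_def)
      qed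
      moreover have "\<forall>u\<in>{0..<Suc k}. \<forall>v\<in>{0..<Suc k}. F u v \<longrightarrow> E ((g(k := x)) u) ((g(k := x)) v)"
        using g F unfolding I_def by fastforce
      ultimately show "m (g, x) \<in> I (Suc k)" unfolding m_def I_def by simp
    qed
    show "I (Suc k) \<subseteq> m ` \<Sigma>"
    proof
      fix G assume G: "G \<in> I (Suc k)"
      define g where "g = G(k := undefined)"
      have "g \<in> I k" using G F unfolding I_def g_def
        by (auto simp: PiE_def extensional_def Pi_def inj_on_def)
      moreover have "G k \<in> V - g ` {0..<k}"
      proof -
        have "G k \<in> V" using G unfolding I_def by auto
        moreover have ne: "G k \<noteq> G x" if "x < k" for x
        proof
          assume "G k = G x"
          moreover have "inj_on G {0..<Suc k}" using G unfolding I_def by auto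
          ultimately have "k = x" using that by (auto simp: inj_on_def)
          then show False using that by simp
        qed
        moreover have "g ` {0..<k} = G ` {0..<k}" unfolding g_def by auto
        moreover have "G k \<notin> G ` {0..<k}" using ne by fastforce
        ultimately show ?thesis by blast
      qed
      moreover have "G = m (g, G k)" unfolding m_def g_def by simp
      ultimately show "G \<in> m ` \<Sigma>" unfolding \<Sigma>_def by blast
    qed
  qed
  have finI: "finite (I k)" unfolding I_def using assms(1) by (simp add: finite_PiE)
  have cd: "card (V - g ` {0..<k}) = card V - k" if "g \<in> I k" for g
  proof -
    have "g ` {0..<k} \<subseteq> V" "inj_on g {0..<k}" using that unfolding I_def by auto
    then show ?thesis using assms(1) by (simp add: card_Diff_subset card_image finite_subset)
  qed
  have "card (I (Suc k)) = card \<Sigma>" using card_image[OF injm] imgm by simp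
  also have "\<dots> = (\<Sum>g\<in>I k. card (V - g ` {0..<k}))" unfolding \<Sigma>_def
    using finI assms(1) by (simp add: card_SigmaI)
  also have "\<dots> = card (I k) * (card V - k)" using cd by simp
  finally show ?thesis unfolding I_def .
qed

lemma choose4: "n \<ge> 4 \<Longrightarrow> real (n choose 4) * 24 = real n * (real n - 1) * (real n - 2) * (real n - 3)"
proof -
  assume "n \<ge> 4"
  then obtain m0 where "n = 4 + m0" using le_Suc_ex by blast
  then obtain m where n: "n = Suc (Suc (Suc (Suc m)))" by simp
  have f4: "fact 4 = (24::nat)" by (simp add: numeral_eq_Suc)
  have "fact 4 * fact m * (n choose 4) = fact n" using binomial_fact_lemma[of 4 n] n by simp
  moreover have "fact n = (m+4)*(m+3)*(m+2)*(m+1) * (fact m :: nat)" unfolding n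
    by (simp add: algebra_simps)
  ultimately have "fact m * (24 * (n choose 4)) = fact m * ((m+4)*(m+3)*(m+2)*(m+1))"
    unfolding f4 by (simp add: algebra_simps)
  then have "24 * (n choose 4) = (m+4)*(m+3)*(m+2)*(m+1)" by simp
  then have "real (24 * (n choose 4)) = real ((m+4)*(m+3)*(m+2)*(m+1))" by simp
  then show ?thesis unfolding n by (simp add: algebra_simps)
qed

lemma card4_obtain:
  assumes "card S = 4"
  obtains a b c d where "S = {a,b,c,d}" "distinct [a,b,c,d]"
proof -
  obtain a T where "S = insert a T" "a \<notin> T" "card T = 3" using assms card_eq_SucD[of S 3] by auto
  moreover obtain b c d where "T = {b,c,d}" "b \<noteq> c" "c \<noteq> d" "b \<noteq> d" using \<open>card T = 3\<close> card_3_iff by metis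
  ultimately show ?thesis using that by auto
qed



theorem lemma2p1:
  fixes V :: "'a set" and E :: "'a \<Rightarrow> 'a \<Rightarrow> bool"
  assumes "simple_graph V E" and "card V \<ge> 4"
  shows "weighted4 V E \<le> 5/16 \<longleftrightarrow> phi V E \<le> 0"
proof -
  have finV: "finite V" and sym: "\<forall>x y. E x y \<longrightarrow> E y x" and irr: "\<forall>x. \<not> E x x"
    using assms(1) unfolding simple_graph_def by auto
  define n where "n = card V"
  have n4: "n \<ge> 4" using assms(2) n_def by simp
  define T where "T = {S. S \<subseteq> V \<and> card S = 4}"
  define cnt where "cnt (F :: nat \<Rightarrow> nat \<Rightarrow> bool) S = real (card {g \<in> {0..<4} \<rightarrow>\<^sub>E S. inj_on g {0..<4} \<and> (\<forall>u\<in>{0..<4}. \<forall>v\<in>{0..<4}. F u v \<longrightarrow> E (g u) (g v))})" for F S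
  define ind where "ind (F :: nat \<Rightarrow> nat \<Rightarrow> bool) S = (if induced_iso E S F 4 then 1 else 0::real)" for F S
  define C where "C = real (n choose 4)"
  have CT: "card T = n choose 4" unfolding T_def n_def using n_subsets[OF finV] by simp
  have Cpos: "C > 0" unfolding C_def using n4 by simp
  have finT: "finite T" unfolding T_def using finV by simp
  have pd: "p_dens F 4 V E = (\<Sum>S\<in>T. ind F S) / C" for F
  proof -
    have "{S. S \<subseteq> V \<and> card S = 4 \<and> induced_iso E S F 4} = {S\<in>T. induced_iso E S F 4}" unfolding T_def by auto
    moreover have "real (card {S\<in>T. induced_iso E S F 4}) = (\<Sum>S\<in>T. ind F S)"
      unfolding ind_def using finT by (simp add: sum.If_cases Int_def)
    ultimately show ?thesis unfolding p_dens_def C_def n_def by simp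
  qed
  have prod4: "(\<Prod>i<4. real n - real i) = 24 * C"
    using choose4[OF n4] unfolding C_def by (simp add: numeral_eq_Suc algebra_simps)
  have prod2: "(\<Prod>i<2. real n - real i) = real n * (real n - 1)"
    by (simp add: numeral_eq_Suc)
  have tC4: "t_inj C4 4 V E = (\<Sum>S\<in>T. cnt C4 S) / (24 * C)"
    unfolding t_inj_def partition_inj[OF finV] cnt_def T_def n_def[symmetric] prod4 by simp
  define I where "I h = {g \<in> {0..<h} \<rightarrow>\<^sub>E V. inj_on g {0..<h} \<and> (\<forall>u\<in>{0..<h}. \<forall>v\<in>{0..<h}. K2 u v \<longrightarrow> E (g u) (g v))}" for h
  have K2b: "\<forall>u v. K2 u v \<longrightarrow> u < 2 \<and> v < 2" unfolding K2_def mk_graph_def by auto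
  have K2c: "\<forall>u v. K2 u v \<longrightarrow> u < 3 \<and> v < 3" unfolding K2_def mk_graph_def by auto
  have e3: "card (I 3) = card (I 2) * (n - 2)"
    using extend_inj[OF finV K2b, of E] unfolding I_def n_def by (simp add: numeral_eq_Suc)
  have e4: "card (I 4) = card (I 3) * (n - 3)"
    using extend_inj[OF finV K2c, of E] unfolding I_def n_def by (simp add: numeral_eq_Suc)
  have p4: "real (card (I 4)) = (\<Sum>S\<in>T. cnt K2 S)"
    unfolding I_def partition_inj[OF finV] cnt_def T_def by simp
  have tK2: "t_inj K2 2 V E = (\<Sum>S\<in>T. cnt K2 S) / (24 * C)"
  proof -
    have "real (card (I 4)) = real (card (I 2)) * (real n - 2) * (real n - 3)"
      using e3 e4 n4 by (simp add: of_nat_diff)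
    moreover have "24 * C = real n * (real n - 1) * (real n - 2) * (real n - 3)"
      using choose4[OF n4] unfolding C_def by simp
    moreover have "real n - 2 > 0" "real n - 3 > 0" using n4 by auto
    ultimately have "real (card (I 2)) / (real n * (real n - 1)) = real (card (I 4)) / (24 * C)"
    proof -
      assume h1: "real (card (I 4)) = real (card (I 2)) * (real n - 2) * (real n - 3)"
        and h2: "24 * C = real n * (real n - 1) * (real n - 2) * (real n - 3)"
        and h3: "real n - 2 > 0" "real n - 3 > 0"
      have "real (card (I 4)) / (24 * C) = (real (card (I 2)) * ((real n - 2) * (real n - 3))) / ((real n * (real n - 1)) * ((real n - 2) * (real n - 3)))"
        unfolding h1 h2 by (simp add: mult.assoc)
      also have "\<dots> = real (card (I 2)) / (real n * (real n - 1))"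
        using h3 by (intro nonzero_mult_divide_mult_cancel_right) simp
      finally show ?thesis by simp
    qed
    then show ?thesis unfolding t_inj_def prod2 p4[symmetric] n_def[symmetric] I_def by simp
  qed
  have loc: "48 * ind K4 S + 24 * ind (compl4 K4) S + 20 * ind D4 S + 20 * ind (compl4 D4) S + 16 * ind P3 S + 8 * ind (compl4 P3) S
     + 24 * ind C4 S + 16 * ind (compl4 C4) S + 12 * ind K13 S + 12 * ind (compl4 K13) S + 12 * ind P4 S = 24 + 2 * cnt C4 S - cnt K2 S"
    if "S \<in> T" for S
  proof -
    have "card S = 4" using that unfolding T_def by simp
    then obtain a b c d where S: "S = {a,b,c,d}" "distinct [a,b,c,d]" by (rule card4_obtain)
    show ?thesis unfolding S(1) ind_def cnt_def by (rule local4[OF sym irr S(2)])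
  qed
  have "(\<Sum>S\<in>T. 48 * ind K4 S + 24 * ind (compl4 K4) S + 20 * ind D4 S + 20 * ind (compl4 D4) S + 16 * ind P3 S + 8 * ind (compl4 P3) S
     + 24 * ind C4 S + 16 * ind (compl4 C4) S + 12 * ind K13 S + 12 * ind (compl4 K13) S + 12 * ind P4 S) = (\<Sum>S\<in>T. 24 + 2 * cnt C4 S - cnt K2 S)"
    by (rule sum.cong) (auto simp: loc)
  then have rel: "48 * (\<Sum>S\<in>T. ind K4 S) + 24 * (\<Sum>S\<in>T. ind (compl4 K4) S) + 20 * (\<Sum>S\<in>T. ind D4 S) + 20 * (\<Sum>S\<in>T. ind (compl4 D4) S)
     + 16 * (\<Sum>S\<in>T. ind P3 S) + 8 * (\<Sum>S\<in>T. ind (compl4 P3) S)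
     + 24 * (\<Sum>S\<in>T. ind C4 S) + 16 * (\<Sum>S\<in>T. ind (compl4 C4) S) + 12 * (\<Sum>S\<in>T. ind K13 S) + 12 * (\<Sum>S\<in>T. ind (compl4 K13) S)
     + 12 * (\<Sum>S\<in>T. ind P4 S) = 24 * C + 2 * (\<Sum>S\<in>T. cnt C4 S) - (\<Sum>S\<in>T. cnt K2 S)"
    by (simp add: sum.distrib sum_subtractf sum_distrib_left[symmetric] CT C_def)
  have w48: "48 * C * weighted4 V E = 48 * (\<Sum>S\<in>T. ind K4 S) + 24 * (\<Sum>S\<in>T. ind (compl4 K4) S) + 20 * (\<Sum>S\<in>T. ind D4 S) + 20 * (\<Sum>S\<in>T. ind (compl4 D4) S)
     + 16 * (\<Sum>S\<in>T. ind P3 S) + 8 * (\<Sum>S\<in>T. ind (compl4 P3) S)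
     + 24 * (\<Sum>S\<in>T. ind C4 S) + 16 * (\<Sum>S\<in>T. ind (compl4 C4) S) + 12 * (\<Sum>S\<in>T. ind K13 S) + 12 * (\<Sum>S\<in>T. ind (compl4 K13) S)
     + 12 * (\<Sum>S\<in>T. ind P4 S)"
    unfolding weighted4_def pd using Cpos by (simp add: field_simps)
  have p48: "48 * C * (5/16 + phi V E / 2) = 24 * C + 2 * (\<Sum>S\<in>T. cnt C4 S) - (\<Sum>S\<in>T. cnt K2 S)"
    unfolding phi_def tC4 tK2 using Cpos by (simp add: field_simps)
  have "48 * C * weighted4 V E = 48 * C * (5/16 + phi V E / 2)" using w48 p48 rel by simp
  then have "weighted4 V E = 5/16 + phi V E / 2" using Cpos by simp
  then show ?thesis by simp
qed

end
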